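(* Let $A=[A_1,\ldots,A_n]$ be an $n\times n\times n$ ASHM such that $L(A)=1A_1+2A_2+\cdots+nA_n$ is a latin square (each of $1,\ldots,n$ appears exactly once in every row and every column). Then $A$ is a permutation hypermatrix.
   Context: An $n\times n$ alternating sign matrix (ASM) is an $n\times n$ matrix with entries in $\{0,1,-1\}$ such that in every row and column the nonzeros alternate in sign, beginning and ending with $+1$. An $n\times n\times n$ hypermatrix $A=[a_{ijk}]$ is written $A=[A_1,\ldots,A_n]$ with $A_k=[a_{ijk}]_{i,j}$. Its lines are obtained by fixing two of the three indices. $A$ is an alternating sign hypermatrix (ASHM) if all entries lie in $\{0,\pm1\}$ and in every line the nonzeros alternate in sign beginning and ending with $+1$. A permutation hypermatrix is a $(0,1)$-hypermatrix with exactly one $1$ in each line. *)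

theory Defs
  imports Main
begin

definition alt_sign_seq :: "int list \<Rightarrow> bool" where
  "alt_sign_seq xs \<longleftrightarrow>
     set xs \<subseteq> {0, 1, -1} \<and>
     (let ys = filter (\<lambda>x. x \<noteq> 0) xs in
        ys \<noteq> [] \<and> hd ys = 1 \<and> last ys = 1 \<and>
        (\<forall>i. Suc i < length ys \<longrightarrow> ys ! Suc i = - (ys ! i)))"

(* n x n x n hypermatrix: A i j k with indices in {1..n}; A_k = [A i j k]_{i,j}. *)
type_synonym hypermatrix = "nat \<Rightarrow> nat \<Rightarrow> nat \<Rightarrow> int"

definition ASHM :: "nat \<Rightarrow> hypermatrix \<Rightarrow> bool" where
  "ASHM n A \<longleftrightarrow>
     (\<forall>i\<in>{1..n}. \<forall>j\<in>{1..n}. \<forall>k\<in>{1..n}. A i j k \<in> {0, 1, -1}) \<and>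
     (\<forall>j\<in>{1..n}. \<forall>k\<in>{1..n}. alt_sign_seq (map (\<lambda>i. A i j k) [1..<n+1])) \<and>
     (\<forall>i\<in>{1..n}. \<forall>k\<in>{1..n}. alt_sign_seq (map (\<lambda>j. A i j k) [1..<n+1])) \<and>
     (\<forall>i\<in>{1..n}. \<forall>j\<in>{1..n}. alt_sign_seq (map (\<lambda>k. A i j k) [1..<n+1]))"

definition permutation_hypermatrix :: "nat \<Rightarrow> hypermatrix \<Rightarrow> bool" where
  "permutation_hypermatrix n A \<longleftrightarrow>
     (\<forall>i\<in>{1..n}. \<forall>j\<in>{1..n}. \<forall>k\<in>{1..n}. A i j k \<in> {0, 1}) \<and>
     (\<forall>j\<in>{1..n}. \<forall>k\<in>{1..n}. \<exists>!i. i \<in> {1..n} \<and> A i j k = 1) \<and>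
     (\<forall>i\<in>{1..n}. \<forall>k\<in>{1..n}. \<exists>!j. j \<in> {1..n} \<and> A i j k = 1) \<and>
     (\<forall>i\<in>{1..n}. \<forall>j\<in>{1..n}. \<exists>!k. k \<in> {1..n} \<and> A i j k = 1)"

definition Lmat :: "nat \<Rightarrow> hypermatrix \<Rightarrow> nat \<Rightarrow> nat \<Rightarrow> int" where
  "Lmat n A i j = (\<Sum>k=1..n. int k * A i j k)"

definition latin_square :: "nat \<Rightarrow> (nat \<Rightarrow> nat \<Rightarrow> int) \<Rightarrow> bool" where
  "latin_square n M \<longleftrightarrow>
     (\<forall>i\<in>{1..n}. \<forall>v\<in>{1..int n}. \<exists>!j. j \<in> {1..n} \<and> M i j = v) \<and>
     (\<forall>j\<in>{1..n}. \<forall>v\<in>{1..int n}. \<exists>!i. i \<in> {1..n} \<and> M i j = v)"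

end

theory Submission imports Defs begin

lemma sum_list_filter_nz: "sum_list (filter (\<lambda>x. x \<noteq> 0) xs) = sum_list (xs::int list)"
  by (induction xs) auto

lemma alt_aux:
  "set ys \<subseteq> {1,-1::int} \<Longrightarrow> ys \<noteq> [] \<Longrightarrow> last ys = 1 \<Longrightarrow>
   (\<forall>i. Suc i < length ys \<longrightarrow> ys!Suc i = - ys!i) \<Longrightarrow> sum_list ys = (if hd ys = 1 then 1 else 0)"
proof (induction ys)
  case Nil then show ?case by simp
next
  case (Cons x ys)
  show ?case
  proof (cases "ys = []")
    case True then show ?thesis using Cons by simp
  next
    case False
    have alt: "\<forall>i. Suc i < length ys \<longrightarrow> ys!Suc i = - ys!i"
    proof (intro allI impI)
      fix i assume "Suc i < length ys"
      then show "ys!Suc i = - ys!i" using Cons.prems(4)[rule_format, of "Suc i"] by simp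
    qed
    have ih: "sum_list ys = (if hd ys = 1 then 1 else 0)"
      using Cons False alt by auto
    have "hd ys = - x" using Cons.prems(4)[rule_format, of 0] False
      by (simp add: hd_conv_nth)
    moreover have "x = 1 \<or> x = -1" using Cons.prems(1) by auto
    ultimately show ?thesis using ih by auto
  qed
qed

lemma alt_drop:
  assumes "set ys \<subseteq> {1,-1::int}" "ys \<noteq> []" "last ys = 1"
    "\<forall>i. Suc i < length ys \<longrightarrow> ys!Suc i = - ys!i"
  shows "sum_list (drop m ys) \<in> {0,1}"
proof (cases "drop m ys = []")
  case True then show ?thesis by simp
next
  case False
  then have ml: "m < length ys" by simp
  have "set (drop m ys) \<subseteq> {1,-1}" by (rule subset_trans[OF set_drop_subset assms(1)])
  moreover have "last (drop m ys) = 1" using False assms(3) by (simp add: last_drop)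
  moreover have "\<forall>i. Suc i < length (drop m ys) \<longrightarrow> drop m ys!Suc i = - drop m ys!i"
  proof (intro allI impI)
    fix i assume "Suc i < length (drop m ys)"
    then have "Suc (m + i) < length ys" by simp
    then have "ys ! Suc (m+i) = - ys ! (m+i)" using assms(4) by blast
    then show "drop m ys!Suc i = - drop m ys!i" using ml by (simp add: nth_drop)
  qed
  ultimately have "sum_list (drop m ys) = (if hd (drop m ys) = 1 then 1 else 0)"
    by (rule alt_aux[OF _ False])
  then show ?thesis by simp
qed

lemma alt_seq_props:
  assumes "alt_sign_seq xs"
  shows "sum_list (drop m xs) \<in> {0,1}" and "sum_list xs = 1"
proof -
  define P where "P = (\<lambda>x::int. x \<noteq> 0)"
  define ys where "ys = filter P xs"
  have s: "set xs \<subseteq> {0,1,-1}" and ne: "ys \<noteq> []" and h: "hd ys = 1" and l: "last ys = 1"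
    and alt: "\<forall>i. Suc i < length ys \<longrightarrow> ys!Suc i = - ys!i"
    using assms unfolding alt_sign_seq_def ys_def P_def Let_def by auto
  have sy: "set ys \<subseteq> {1,-1}" using s unfolding ys_def P_def by auto
  have "sum_list xs = sum_list ys" unfolding ys_def P_def by (simp add: sum_list_filter_nz)
  then show "sum_list xs = 1" using alt_aux[OF sy ne l alt] h by simp
  have "ys = filter P (take m xs) @ filter P (drop m xs)"
    unfolding ys_def by (metis append_take_drop_id filter_append)
  then have "filter P (drop m xs) = drop (length (filter P (take m xs))) ys" by simp
  then have "sum_list (drop m xs) = sum_list (drop (length (filter P (take m xs))) ys)"
    using sum_list_filter_nz[of "drop m xs"] unfolding P_def by simp
  then show "sum_list (drop m xs) \<in> {0,1}" using alt_drop[OF sy ne l alt] by simp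
qed

lemma line_props:
  assumes "alt_sign_seq (map f [1..<n+1])" "k \<in> {1..n}"
  shows "sum f {k..n} \<in> {0,1::int}" and "sum f {1..n} = 1"
proof -
  have d: "drop (k-1) (map f [1..<n+1]) = map f [k..<n+1]"
    proof -
    have "1 + (k-1) = k" using assms(2) by simp
    then show ?thesis by (simp only: drop_map drop_upt)
  qed
  have e: "\<And>a. sum f {a..n} = sum_list (map f [a..<n+1])"
  proof -
    fix a
    have "sum f {a..n} = sum f {a..<Suc n}" by (simp only: atLeastLessThanSuc_atLeastAtMost)
    also have "\<dots> = sum_list (map f [a..<Suc n])" by (simp only: sum_set_upt_conv_sum_list_nat[symmetric] set_upt)
    finally show "sum f {a..n} = sum_list (map f [a..<n+1])" by (simp only: Suc_eq_plus1)
  qed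
  have "sum f {k..n} = sum_list (drop (k-1) (map f [1..<n+1]))" by (simp only: d e)
  then show "sum f {k..n} \<in> {0,1::int}" using alt_seq_props(1)[OF assms(1), of "k-1"] by metis
  show "sum f {1..n} = 1" using alt_seq_props(2)[OF assms(1)] e[of 1] by metis
qed

lemma swap1: "(\<Sum>k=1..n. sum f {k..n}) = (\<Sum>k=1..n. int k * (f k::int))"
proof (induction n)
  case 0 then show ?case by simp
next
  case (Suc n)
  have "(\<Sum>k=1..Suc n. sum f {k..Suc n}) = (\<Sum>k=1..Suc n. sum f {k..n} + f (Suc n))"
    by (rule sum.cong) auto
  also have "\<dots> = (\<Sum>k=1..Suc n. sum f {k..n}) + int (Suc n) * f (Suc n)"
    by (simp add: sum.distrib)
  also have "(\<Sum>k=1..Suc n. sum f {k..n}) = (\<Sum>k=1..n. sum f {k..n})" by simp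
  finally show ?case using Suc by simp
qed

lemma G0: "(\<Sum>k=1..m. 2 * int k - 1) = int m ^ 2"
  by (induction m) (auto simp: power2_eq_square algebra_simps)

lemma G: assumes "v \<le> n"
  shows "(\<Sum>k=1..n. if int k \<le> int v then 2 * int k - 2 * int v - 1 else 0) = - (int v ^ 2)"
proof -
  have "(\<Sum>k=1..n. if int k \<le> int v then 2 * int k - 2 * int v - 1 else 0)
      = (\<Sum>k\<in>{k\<in>{1..n}. int k \<le> int v}. 2 * int k - 2 * int v - 1)"
    by (rule sum.inter_filter[symmetric]) simp
  also have "{k\<in>{1..n}. int k \<le> int v} = {1..v}" using assms by auto
  also have "(\<Sum>k=1..v. 2 * int k - 2 * int v - 1) = (\<Sum>k=1..v. 2 * int k - 1) - (\<Sum>k=1..v. 2 * int v)"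
    by (simp only: sum_subtractf[symmetric]) (rule sum.cong, auto)
  also have "\<dots> = - (int v ^ 2)" using G0[of v] by (simp add: power2_eq_square)
  finally show ?thesis .
qed

lemma H: "(\<Sum>k=1..n. (2 * int k - 1) * (int n + 1 - int k)) = (\<Sum>v=1..n. int v ^ 2)"
proof (induction n)
  case 0 then show ?case by simp
next
  case (Suc n)
  have "(\<Sum>k=1..n. (2 * int k - 1) * (int (Suc n) + 1 - int k))
      = (\<Sum>k=1..n. (2 * int k - 1) * (int n + 1 - int k) + (2 * int k - 1))"
    by (rule sum.cong) (auto simp: algebra_simps)
  also have "\<dots> = (\<Sum>v=1..n. int v ^ 2) + int n ^ 2" by (simp only: sum.distrib Suc.IH G0)
  finally show ?case by (simp add: power2_eq_square algebra_simps)
qed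

lemma unique_one:
  fixes f :: "'a \<Rightarrow> int"
  assumes "finite S" "\<forall>x\<in>S. f x \<in> {0,1}" "sum f S = 1"
  shows "\<exists>!x. x \<in> S \<and> f x = 1"
proof -
  have ex: "\<exists>x. x \<in> S \<and> f x = 1"
  proof (rule ccontr)
    assume "\<not> ?thesis"
    then have "\<forall>x\<in>S. f x = 0" using assms(2) by auto
    then have "sum f S = 0" by simp
    then show False using assms(3) by simp
  qed
  have "x = y" if "x \<in> S" "f x = 1" "y \<in> S" "f y = 1" for x y
  proof (rule ccontr)
    assume "x \<noteq> y"
    then have "sum f {x,y} = 2" using that by simp
    moreover have "sum f {x,y} \<le> sum f S"
      by (rule sum_mono2) (use assms that in auto)
    ultimately show False using assms(3) by simp
  qed
  then show ?thesis using ex by blast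
qed


lemma core:
  fixes M :: "nat \<Rightarrow> nat \<Rightarrow> int" and c :: "nat \<Rightarrow> int"
  assumes rows: "\<And>j k. j\<in>{1..n} \<Longrightarrow> k\<in>{1..n} \<Longrightarrow> sum (M j) {k..n} \<in> {0,1}"
    and cols: "\<And>k. k\<in>{1..n} \<Longrightarrow> (\<Sum>j=1..n. M j k) = 1"
    and cdef: "\<And>j. j\<in>{1..n} \<Longrightarrow> c j = (\<Sum>k=1..n. int k * M j k)"
    and bij: "\<And>v. v\<in>{1..n} \<Longrightarrow> \<exists>!j. j\<in>{1..n} \<and> c j = int v"
    and jk: "j\<in>{1..n}" "k\<in>{1..n}"
  shows "M j k \<ge> 0"
proof -
  define r where "r j k = sum (M j) {k..n}" for j k
  define g where "g v = (THE j. j\<in>{1..n} \<and> c j = int v)" for v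
  have g: "g v \<in> {1..n} \<and> c (g v) = int v" if "v\<in>{1..n}" for v
    unfolding g_def by (rule theI') (rule bij[OF that])
  have ginj: "inj_on g {1..n}"
  proof (rule inj_onI)
    fix a b assume "a \<in> {1..n}" "b \<in> {1..n}" "g a = g b"
    then have "int a = int b" using g by metis
    then show "a = b" by simp
  qed
  have gimg: "g ` {1..n} = {1..n}"
    by (rule endo_inj_surj) (use g ginj in auto)
  have reidx: "(\<Sum>j=1..n. h (c j)) = (\<Sum>v=1..n. h (int v))" for h :: "int \<Rightarrow> int"
  proof -
    have "(\<Sum>j=1..n. h (c j)) = (\<Sum>j\<in>g ` {1..n}. h (c j))" by (simp only: gimg)
    also have "\<dots> = (\<Sum>v=1..n. h (c (g v)))" using sum.reindex[OF ginj, of "\<lambda>j. h (c j)"] by (simp add: comp_def)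
    also have "\<dots> = (\<Sum>v=1..n. h (int v))" by (rule sum.cong) (auto simp: g)
    finally show ?thesis .
  qed
  have crange: "\<exists>v\<in>{1..n}. c j' = int v" if "j'\<in>{1..n}" for j'
  proof -
    from that gimg obtain v where "v\<in>{1..n}" "j' = g v" by blast
    then show ?thesis using g by auto
  qed
  have csum: "(\<Sum>k=1..n. r j' k) = c j'" if "j'\<in>{1..n}" for j'
    unfolding r_def using swap1[of "M j'" n] cdef[OF that] by simp
  have colr: "(\<Sum>j=1..n. r j k') = int n + 1 - int k'" if "k'\<in>{1..n}" for k'
  proof -
    have "(\<Sum>j=1..n. r j k') = (\<Sum>k''\<in>{k'..n}. \<Sum>j=1..n. M j k'')" unfolding r_def by (rule sum.swap)
    also have "\<dots> = (\<Sum>k''\<in>{k'..n}. 1)" 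
    proof (rule sum.cong)
      fix x assume "x \<in> {k'..n}"
      then have "x \<in> {1..n}" using that by auto
      then show "(\<Sum>j=1..n. M j x) = 1" by (rule cols)
    qed simp
    also have "\<dots> = int n + 1 - int k'" using that by simp
    finally show ?thesis .
  qed
  define T where "T j k = (r j k - (if int k \<le> c j then 1 else 0)) * (2 * int k - 2 * c j - 1)" for j k
  have Tnn: "T j' k' \<ge> 0" if "j'\<in>{1..n}" "k'\<in>{1..n}" for j' k'
  proof -
    have "r j' k' \<in> {0,1}" using rows that unfolding r_def by blast
    then show ?thesis unfolding T_def by (cases "int k' \<le> c j'") auto
  qed
  have Trow: "(\<Sum>k=1..n. T j' k) = (\<Sum>k=1..n. r j' k * (2 * int k - 1)) - (c j')^2" if jj: "j'\<in>{1..n}" for j'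
  proof -
    obtain v where v: "v\<in>{1..n}" "c j' = int v" using crange[OF jj] by blast
    have "(\<Sum>k=1..n. T j' k) = (\<Sum>k=1..n. r j' k * (2 * int k - 1)) - 2 * c j' * (\<Sum>k=1..n. r j' k)
         - (\<Sum>k=1..n. if int k \<le> c j' then 2*int k - 2*c j' - 1 else 0)"
      unfolding T_def sum_subtractf[symmetric] sum_distrib_left by (rule sum.cong) (auto simp: algebra_simps)
    also have "\<dots> = (\<Sum>k=1..n. r j' k * (2 * int k - 1)) - 2 * c j' * c j' + (c j')^2"
      using csum[OF jj, unfolded v(2)] G[of v n] v(1) unfolding v(2) by simp
    finally show ?thesis by (simp add: power2_eq_square)
  qed
  have A1: "(\<Sum>j=1..n. \<Sum>k=1..n. T j k) = (\<Sum>j=1..n. (\<Sum>k=1..n. r j k * (2*int k - 1)) - (c j)^2)"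
    by (rule sum.cong[OF refl], rule Trow, assumption)
  have A2: "(\<Sum>j=1..n. (\<Sum>k=1..n. r j k * (2*int k - 1)) - (c j)^2)
      = (\<Sum>j=1..n. \<Sum>k=1..n. r j k * (2*int k - 1)) - (\<Sum>j=1..n. (c j)^2)"
    by (simp add: sum_subtractf)
  have A3: "(\<Sum>j=1..n. \<Sum>k=1..n. r j k * (2*int k - 1)) = (\<Sum>k=1..n. (2*int k - 1) * (\<Sum>j=1..n. r j k))"
    by (subst sum.swap) (simp add: sum_distrib_left mult.commute)
  have A4: "(\<Sum>k=1..n. (2*int k - 1) * (\<Sum>j=1..n. r j k)) = (\<Sum>k=1..n. (2*int k - 1) * (int n + 1 - int k))"
    by (rule sum.cong[OF refl]) (simp only: colr)
  have A5: "(\<Sum>j=1..n. (c j)^2) = (\<Sum>v=1..n. int v ^2)" by (rule reidx)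
  have total: "(\<Sum>j=1..n. \<Sum>k=1..n. T j k) = 0"
    using A1 A2 A3 A4 A5 H[of n] by simp
  have nn: "0 \<le> (\<Sum>k=1..n. T j' k)" if "j'\<in>{1..n}" for j'
    by (rule sum_nonneg, rule Tnn[OF that])
  have inner: "\<forall>j'\<in>{1..n}. (\<Sum>k=1..n. T j' k) = 0"
    using total sum_nonneg_eq_0_iff[of "{1..n}" "\<lambda>j. \<Sum>k=1..n. T j k", OF _ nn]
    by simp
  have rowj: "(\<Sum>k=1..n. T j k) = 0" using inner jk(1) by blast
  have T0: "T j k' = 0" if kk: "k'\<in>{1..n}" for k'
  proof -
    have "\<forall>k\<in>{1..n}. T j k = 0"
      using rowj sum_nonneg_eq_0_iff[of "{1..n}" "\<lambda>k. T j k", OF _ Tnn[OF jk(1)]] by simp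
    then show ?thesis using kk by blast
  qed
  have rk: "r j k' = (if int k' \<le> c j then 1 else 0)" if "k'\<in>{1..n}" for k'
  proof -
    have "2 * int k' - 2 * c j - 1 \<noteq> 0" by presburger
    then show ?thesis using T0[OF that] unfolding T_def by simp
  qed
  obtain v where v: "v\<in>{1..n}" "c j = int v" using crange[OF jk(1)] by blast
  have Mr: "M j k = r j k - r j (Suc k)"
    unfolding r_def using jk(2) by (simp add: sum.atLeast_Suc_atMost)
  show ?thesis
  proof (cases "k < n")
    case True
    then have "Suc k \<in> {1..n}" by simp
    then show ?thesis using Mr rk[OF jk(2)] rk[of "Suc k"] by auto
  next
    case False
    then have "k = n" using jk(2) by simp
    then have "r j (Suc k) = 0" unfolding r_def by simp
    then show ?thesis using Mr rk[OF jk(2)] by auto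
  qed
qed


theorem mainTheorem4:
  fixes n :: nat and A :: hypermatrix
  assumes "ASHM n A"
    and "latin_square n (Lmat n A)"
  shows "permutation_hypermatrix n A"
proof -
  have vals: "\<forall>i\<in>{1..n}. \<forall>j\<in>{1..n}. \<forall>k\<in>{1..n}. A i j k \<in> {0, 1, -1}"
    and l1: "\<forall>j\<in>{1..n}. \<forall>k\<in>{1..n}. alt_sign_seq (map (\<lambda>i. A i j k) [1..<n+1])"
    and l2: "\<forall>i\<in>{1..n}. \<forall>k\<in>{1..n}. alt_sign_seq (map (\<lambda>j. A i j k) [1..<n+1])"
    and l3: "\<forall>i\<in>{1..n}. \<forall>j\<in>{1..n}. alt_sign_seq (map (\<lambda>k. A i j k) [1..<n+1])"
    using assms(1) unfolding ASHM_def by blast+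
  have lat: "\<forall>i\<in>{1..n}. \<forall>v\<in>{1..int n}. \<exists>!j. j \<in> {1..n} \<and> Lmat n A i j = v"
    using assms(2) unfolding latin_square_def by blast
  have nonneg: "A i j k \<ge> 0" if ii: "i\<in>{1..n}" and jj: "j\<in>{1..n}" and kk: "k\<in>{1..n}" for i j k
  proof -
    have rows: "sum ((\<lambda>j k. A i j k) j') {k'..n} \<in> {0,1}" if "j'\<in>{1..n}" "k'\<in>{1..n}" for j' k'
      using line_props(1)[OF l3[rule_format, OF ii that(1)] that(2)] by simp
    have cols: "(\<Sum>j'=1..n. (\<lambda>j k. A i j k) j' k') = 1" if "k'\<in>{1..n}" for k'
      using line_props(2)[OF l2[rule_format, OF ii that] that] by simp
    have cdef: "Lmat n A i j' = (\<Sum>k=1..n. int k * (\<lambda>j k. A i j k) j' k)" for j'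
      unfolding Lmat_def by simp
    have bij: "\<exists>!j'. j'\<in>{1..n} \<and> Lmat n A i j' = int v" if "v\<in>{1..n}" for v
    proof -
      have "int v \<in> {1..int n}" using that by auto
      then show ?thesis using lat ii by blast
    qed
    show ?thesis using core[of n "\<lambda>j k. A i j k" "Lmat n A i", OF rows cols cdef bij jj kk] by simp
  qed
  have v01: "A i j k \<in> {0,1}" if "i\<in>{1..n}" "j\<in>{1..n}" "k\<in>{1..n}" for i j k
    using vals nonneg[OF that] that by fastforce
  show ?thesis unfolding permutation_hypermatrix_def
  proof (intro conjI ballI)
    fix i j k assume "i\<in>{1..n}" "j\<in>{1..n}" "k\<in>{1..n}"
    then show "A i j k \<in> {0,1}" by (rule v01)
  next
    fix j k assume jk: "j\<in>{1..n}" "k\<in>{1..n}"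
    show "\<exists>!i. i \<in> {1..n} \<and> A i j k = 1"
      by (rule unique_one) (use v01 jk line_props(2)[OF l1[rule_format, OF jk] jk(1)] in auto)
  next
    fix i k assume ik: "i\<in>{1..n}" "k\<in>{1..n}"
    show "\<exists>!j. j \<in> {1..n} \<and> A i j k = 1"
      by (rule unique_one) (use v01 ik line_props(2)[OF l2[rule_format, OF ik] ik(1)] in auto)
  next
    fix i j assume ij: "i\<in>{1..n}" "j\<in>{1..n}"
    show "\<exists>!k. k \<in> {1..n} \<and> A i j k = 1"
      by (rule unique_one) (use v01 ij line_props(2)[OF l3[rule_format, OF ij] ij(1)] in auto)
  qed
qed

end
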